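(* Let $E$ be a finite set, $\tau:2^E\to 2^E$, $A\subseteq E$ and $x\in A$. If $(E,\tau)$ is a violator space, then $x\in ex(A)$ if and only if $\tau(A)\neq\tau(A-\{x\})$. If $(E,\tau)$ is a convex space, then $x\in ex(A)$ implies $\tau(A)\neq\tau(A-\{x\})$.
   Context: $(E,\tau)$ is a violator space if (C1) $X\subseteq\tau(X)$ for all $X$, and (C22) $F\subseteq G\subseteq\tau(F)$ implies $\tau(G)=\tau(F)$. $(E,\tau)$ is a convex space if (C1) holds and (convexity) for all $X\subseteq Y\subseteq Z\subseteq E$ with $\tau(X)=\tau(Z)$ we have $\tau(Y)=\tau(X)$. An element $x\in A$ is an extreme point of $A$ if $x\notin\tau(A-\{x\})$; $ex(A)$ denotes the set of extreme points of $A$. *)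

theory Defs
  imports Main
begin

definition set_operator :: "'a set \<Rightarrow> ('a set \<Rightarrow> 'a set) \<Rightarrow> bool" where
  "set_operator E tau \<longleftrightarrow> (\<forall>X. X \<subseteq> E \<longrightarrow> tau X \<subseteq> E)"

definition violator_space :: "'a set \<Rightarrow> ('a set \<Rightarrow> 'a set) \<Rightarrow> bool" where
  "violator_space E tau \<longleftrightarrow>
     (\<forall>X. X \<subseteq> E \<longrightarrow> X \<subseteq> tau X) \<and>
     (\<forall>F G. F \<subseteq> E \<longrightarrow> G \<subseteq> E \<longrightarrow> F \<subseteq> G \<longrightarrow> G \<subseteq> tau F \<longrightarrow> tau G = tau F)"

definition convex_space :: "'a set \<Rightarrow> ('a set \<Rightarrow> 'a set) \<Rightarrow> bool" where
  "convex_space E tau \<longleftrightarrow>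
     (\<forall>X. X \<subseteq> E \<longrightarrow> X \<subseteq> tau X) \<and>
     (\<forall>X Y Z. X \<subseteq> Y \<longrightarrow> Y \<subseteq> Z \<longrightarrow> Z \<subseteq> E \<longrightarrow> tau X = tau Z \<longrightarrow> tau Y = tau X)"

definition ex_points :: "('a set \<Rightarrow> 'a set) \<Rightarrow> 'a set \<Rightarrow> 'a set" where
  "ex_points tau A = {x \<in> A. x \<notin> tau (A - {x})}"

end

theory Submission
  imports Defs
begin

theorem mainTheorem11:
  fixes E :: "'a set" and tau :: "'a set \<Rightarrow> 'a set" and A :: "'a set" and x :: 'a
  assumes "finite E" and "set_operator E tau" and "A \<subseteq> E" and "x \<in> A"
  shows "(violator_space E tau \<longrightarrow> (x \<in> ex_points tau A \<longleftrightarrow> tau A \<noteq> tau (A - {x})))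
       \<and> (convex_space E tau \<longrightarrow> (x \<in> ex_points tau A \<longrightarrow> tau A \<noteq> tau (A - {x})))"
proof (intro conjI impI)
  assume v: "violator_space E tau"
  have C1: "\<And>X. X \<subseteq> E \<Longrightarrow> X \<subseteq> tau X" using v unfolding violator_space_def by blast
  have C2: "\<And>F G. F \<subseteq> E \<Longrightarrow> G \<subseteq> E \<Longrightarrow> F \<subseteq> G \<Longrightarrow> G \<subseteq> tau F \<Longrightarrow> tau G = tau F"
    using v unfolding violator_space_def by blast
  have AE: "A - {x} \<subseteq> E" using assms(3) by auto
  have c1: "A \<subseteq> tau A" using C1 assms(3) .
  show "x \<in> ex_points tau A \<longleftrightarrow> tau A \<noteq> tau (A - {x})"
  proof
    assume "x \<in> ex_points tau A"
    then show "tau A \<noteq> tau (A - {x})" using c1 assms(4) unfolding ex_points_def by auto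
  next
    assume ne: "tau A \<noteq> tau (A - {x})"
    show "x \<in> ex_points tau A"
    proof (rule ccontr)
      assume "x \<notin> ex_points tau A"
      hence xin: "x \<in> tau (A - {x})" using assms(4) unfolding ex_points_def by auto
      have "A - {x} \<subseteq> tau (A - {x})" using C1 AE .
      hence s: "A \<subseteq> tau (A - {x})" using xin by auto
      have "tau A = tau (A - {x})" by (rule C2[OF AE assms(3) _ s]) auto
      thus False using ne by simp
    qed
  qed
next
  assume c: "convex_space E tau" and xe: "x \<in> ex_points tau A"
  have c1: "A \<subseteq> tau A" using c assms(3) unfolding convex_space_def by blast
  show "tau A \<noteq> tau (A - {x})" using c1 assms(4) xe unfolding ex_points_def by auto
qed

end
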